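(* Let $H=\mathrm{diag}(\lambda_1,\dots,\lambda_d)$ with $\lambda_1\ge\dots\ge\lambda_d>0$, in the setting of the context. Assume $\mathbb{E}[n_tn_t^\top]\preceq\sigma^2H$ for all $t$. Run coordinate-wise SGD from $w_1$ with step sizes $\eta_{t,j}=\frac{1}{\lambda_j(t+1)}$, that is, $$w_{t+1,j}=w_{t,j}-\eta_{t,j}\,[H(\xi_t)w_t-b(\xi_t)]_j,\qquad t=1,2,\dots$$ Then for every $t\ge1$, $$2\mathbb{E}[f(w_{t+1})-f(w_* )]=\mathbb{E}\left[\sum_{j=1}^d\lambda_j(w_{t+1,j}-w_{*,j})^2\right]\le\frac{\sum_{j=1}^d\lambda_j(w_{1,j}-w_{*,j})^2}{(t+1)^2}+\frac{t}{(t+1)^2}\,d\sigma^2 .$$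
   Context: Let $\xi$ be a random data sample, $H(\xi)\in\mathbb{R}^{d\times d}$ a random symmetric matrix and $b(\xi)\in\mathbb{R}^d$ a random vector. Define $f(w,\xi)=\frac12w^\top H(\xi)w-b(\xi)^\top w$ and $f(w)=\mathbb{E}_\xi f(w,\xi)$. Set $H=\mathbb{E}H(\xi)$ and $b=\mathbb{E}b(\xi)$, with $w_*=H^{-1}b$. $\xi_1,\xi_2,\dots$ are i.i.d. copies of $\xi$, the initial point $w_1$ is deterministic, and $n_t=(Hw_t-b)-(H(\xi_t)w_t-b(\xi_t))$. The notation $w_{t,j}$ denotes the $j$-th coordinate of $w_t$. *)

theory Defs
  imports "HOL-Probability.Probability"
begin

text \<open>Vectors in R^d are represented as functions nat => real, only the coordinates
  0..d-1 are meaningful; d x d matrices as nat => nat => real.\<close>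

definition quad :: "nat \<Rightarrow> (nat \<Rightarrow> nat \<Rightarrow> real) \<Rightarrow> (nat \<Rightarrow> real) \<Rightarrow> real" where
  "quad d A v = (\<Sum>i<d. \<Sum>j<d. v i * A i j * v j)"

definition psd_le :: "nat \<Rightarrow> (nat \<Rightarrow> nat \<Rightarrow> real) \<Rightarrow> (nat \<Rightarrow> nat \<Rightarrow> real) \<Rightarrow> bool" where
  "psd_le d A B \<longleftrightarrow> (\<forall>v. quad d (\<lambda>i j. B i j - A i j) v \<ge> 0)"

definition loss :: "nat \<Rightarrow> ('s \<Rightarrow> nat \<Rightarrow> nat \<Rightarrow> real) \<Rightarrow> ('s \<Rightarrow> nat \<Rightarrow> real)
    \<Rightarrow> (nat \<Rightarrow> real) \<Rightarrow> 's \<Rightarrow> real" where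
  "loss d Hf bf w x = quad d (Hf x) w / 2 - (\<Sum>j<d. bf x j * w j)"

definition obj :: "'a measure \<Rightarrow> ('a \<Rightarrow> 's) \<Rightarrow> nat \<Rightarrow> ('s \<Rightarrow> nat \<Rightarrow> nat \<Rightarrow> real)
    \<Rightarrow> ('s \<Rightarrow> nat \<Rightarrow> real) \<Rightarrow> (nat \<Rightarrow> real) \<Rightarrow> real" where
  "obj M X d Hf bf w = integral\<^sup>L M (\<lambda>\<omega>. loss d Hf bf w (X \<omega>))"

text \<open>Coordinate-wise SGD: cw_sgd ... t omega = w_t (meaningful for t >= 1; w_0 := w_1 is junk).
  w_{t+1,j} = w_{t,j} - 1/(lambda_j (t+1)) [H(xi_t) w_t - b(xi_t)]_j.\<close>
fun cw_sgd :: "nat \<Rightarrow> (nat \<Rightarrow> real) \<Rightarrow> (nat \<Rightarrow> real) \<Rightarrow> ('s \<Rightarrow> nat \<Rightarrow> nat \<Rightarrow> real)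
    \<Rightarrow> ('s \<Rightarrow> nat \<Rightarrow> real) \<Rightarrow> (nat \<Rightarrow> 'a \<Rightarrow> 's) \<Rightarrow> nat \<Rightarrow> 'a \<Rightarrow> nat \<Rightarrow> real" where
  "cw_sgd d lam w1 Hf bf \<xi> 0 \<omega> = w1"
| "cw_sgd d lam w1 Hf bf \<xi> (Suc 0) \<omega> = w1"
| "cw_sgd d lam w1 Hf bf \<xi> (Suc (Suc n)) \<omega> =
     (\<lambda>j. cw_sgd d lam w1 Hf bf \<xi> (Suc n) \<omega> j
        - 1 / (lam j * real (Suc n + 1)) *
          ((\<Sum>k<d. Hf (\<xi> (Suc n) \<omega>) j k * cw_sgd d lam w1 Hf bf \<xi> (Suc n) \<omega> k)
           - bf (\<xi> (Suc n) \<omega>) j))"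

definition noise :: "nat \<Rightarrow> (nat \<Rightarrow> nat \<Rightarrow> real) \<Rightarrow> (nat \<Rightarrow> real) \<Rightarrow> ('s \<Rightarrow> nat \<Rightarrow> nat \<Rightarrow> real)
    \<Rightarrow> ('s \<Rightarrow> nat \<Rightarrow> real) \<Rightarrow> (nat \<Rightarrow> real) \<Rightarrow> 's \<Rightarrow> nat \<Rightarrow> real" where
  "noise d Hm bm Hf bf w x j =
     ((\<Sum>k<d. Hm j k * w k) - bm j) - ((\<Sum>k<d. Hf x j k * w k) - bf x j)"

end

theory Submission
  imports Defs
begin

lemma cw_sgd_repr:
  "cw_sgd d lam w1 Hf bf \<xi> s \<omega> = cw_sgd d lam w1 Hf bf (\<lambda>i x. x i) s (\<lambda>i. \<xi> i \<omega>)"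
  by (induction d lam w1 Hf bf \<xi> s \<omega> rule: cw_sgd.induct) auto

lemma cw_sgd_local:
  "(\<And>i. 1 \<le> i \<Longrightarrow> i < s \<Longrightarrow> x i = y i) \<Longrightarrow>
   cw_sgd d lam w1 Hf bf (\<lambda>i x. x i) s x = cw_sgd d lam w1 Hf bf (\<lambda>i x. x i) s y"
proof (induction s)
  case 0 thus ?case by simp
next
  case (Suc s) then show ?case
    by (cases s) auto
qed

lemma cw_sgd_meas:
  assumes Hm: "\<forall>i<d. \<forall>j<d. (\<lambda>x. Hf x i j) \<in> borel_measurable S"
  and bm: "\<forall>j<d. (\<lambda>x. bf x j) \<in> borel_measurable S"
  shows "j < d \<Longrightarrow> (\<lambda>x. cw_sgd d lam w1 Hf bf (\<lambda>i x. x i) s x j) \<in> borel_measurable (PiM {1..<s} (\<lambda>_. S))"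
proof (induction s arbitrary: j)
  case 0 thus ?case by simp
next
  case (Suc s)
  show ?case
  proof (cases s)
    case 0 thus ?thesis by simp
  next
    case (Suc m)
    let ?c = "cw_sgd d lam w1 Hf bf (\<lambda>i x. x i)"
    have eq: "?c (Suc s) x j = ?c s (restrict x {1..<s}) j - 1 / (lam j * real (s + 1)) *
          ((\<Sum>k<d. Hf (x s) j k * ?c s (restrict x {1..<s}) k) - bf (x s) j)" for x
    proof -
      have "?c s (restrict x {1..<s}) = ?c s x" by (rule cw_sgd_local) auto
      thus ?thesis using Suc by simp
    qed
    have m1: "(\<lambda>x. ?c s (restrict x {1..<s}) k) \<in> borel_measurable (PiM {1..<Suc s} (\<lambda>_. S))" if "k < d" for k
      using measurable_compose[OF measurable_restrict_subset Suc.IH[OF that], of "{1..<Suc s}"] by (simp add: restrict_def)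
    have m2: "(\<lambda>x. x s) \<in> measurable (PiM {1..<Suc s} (\<lambda>_. S)) S"
      using Suc by (intro measurable_component_singleton) auto
    have m3: "(\<lambda>x. Hf (x s) j k) \<in> borel_measurable (PiM {1..<Suc s} (\<lambda>_. S))" if "k < d" for k
      using measurable_compose[OF m2, of "\<lambda>x. Hf x j k"] Hm that Suc.prems by auto
    have m4: "(\<lambda>x. bf (x s) j) \<in> borel_measurable (PiM {1..<Suc s} (\<lambda>_. S))"
      using measurable_compose[OF m2, of "\<lambda>x. bf x j"] bm Suc.prems by auto
    show ?thesis unfolding eq
      using m1 m3 m4 Suc.prems by (intro borel_measurable_diff borel_measurable_times borel_measurable_sum borel_measurable_const) auto
  qed
qed

lemma abs_mult_le_sq: "\<bar>(a::real) * b\<bar> \<le> a\<^sup>2 + b\<^sup>2"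
proof -
  have "0 \<le> (\<bar>a\<bar> - \<bar>b\<bar>)\<^sup>2" by simp
  hence "2 * (\<bar>a\<bar> * \<bar>b\<bar>) \<le> a\<^sup>2 + b\<^sup>2" by (simp add: power2_eq_square algebra_simps)
  moreover have "0 \<le> \<bar>a\<bar> * \<bar>b\<bar>" by simp
  ultimately have "\<bar>a\<bar> * \<bar>b\<bar> \<le> a\<^sup>2 + b\<^sup>2" by linarith
  thus ?thesis by (simp add: abs_mult)
qed

lemma sq_mult_int:
  fixes f g :: "'a \<Rightarrow> real"
  assumes "f \<in> borel_measurable M" "g \<in> borel_measurable M"
    "integrable M (\<lambda>x. (f x)\<^sup>2)" "integrable M (\<lambda>x. (g x)\<^sup>2)"
  shows "integrable M (\<lambda>x. f x * g x)"
proof (rule Bochner_Integration.integrable_bound[of _ "\<lambda>x. (f x)\<^sup>2 + (g x)\<^sup>2"])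
  show "integrable M (\<lambda>x. (f x)\<^sup>2 + (g x)\<^sup>2)" using assms by auto
  show "(\<lambda>x. f x * g x) \<in> borel_measurable M" using assms by auto
  show "AE x in M. norm (f x * g x) \<le> norm ((f x)\<^sup>2 + (g x)\<^sup>2)"
    using abs_mult_le_sq by auto
qed

lemma sq_add_int:
  fixes f g :: "'a \<Rightarrow> real"
  assumes "f \<in> borel_measurable M" "g \<in> borel_measurable M"
    "integrable M (\<lambda>x. (f x)\<^sup>2)" "integrable M (\<lambda>x. (g x)\<^sup>2)"
  shows "integrable M (\<lambda>x. (f x + g x)\<^sup>2)"
proof -
  have "integrable M (\<lambda>x. (f x)\<^sup>2 + 2 * (f x * g x) + (g x)\<^sup>2)"
    using sq_mult_int[OF assms] assms by auto
  moreover have "(\<lambda>x. (f x + g x)\<^sup>2) = (\<lambda>x. (f x)\<^sup>2 + 2 * (f x * g x) + (g x)\<^sup>2)"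
    by (rule ext) (simp add: power2_sum)
  ultimately show ?thesis by simp
qed

lemma alg: "(L::real) > 0 \<Longrightarrow> (s::real) \<ge> 0 \<Longrightarrow>
  W - 1/(L*(s+1)) * (Sg - bv) - ws = s/(s+1) * (W - ws) + 1/(L*(s+1)) * (L*W - Sg - L*ws + bv)"
proof -
  assume L: "L > 0" and s: "s \<ge> 0"
  define q where "q = 1/(L*(s+1))"
  have a: "s + 1 \<noteq> 0" using s by simp
  have qL: "q * L = 1/(s+1)" unfolding q_def using L a by simp
  have one: "s/(s+1) + 1/(s+1) = 1" using a by (simp add: add_divide_distrib[symmetric])
  have "s/(s+1) * (W - ws) + q * (L*W - Sg - L*ws + bv)
      = s/(s+1) * (W - ws) + (q*L) * (W - ws) - q * (Sg - bv)" by (simp add: algebra_simps)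
  also have "\<dots> = (s/(s+1) + 1/(s+1)) * (W - ws) - q * (Sg - bv)" unfolding qL by (simp add: algebra_simps)
  also have "\<dots> = W - q * (Sg - bv) - ws" unfolding one by simp
  finally show ?thesis unfolding q_def by simp
qed

lemma quad_delta: "j < d \<Longrightarrow> quad d A (\<lambda>i. if i = j then 1 else 0) = A j j"
proof -
  assume j: "j < d"
  have "quad d A (\<lambda>i. if i = j then 1 else 0) = (\<Sum>i<d. \<Sum>k<d. if k = j then (if i = j then A j j else 0) else 0)"
    unfolding quad_def by (intro sum.cong refl) auto
  also have "\<dots> = A j j" using j by simp
  finally show ?thesis .
qed

lemma alg2: "(L::real) > 0 \<Longrightarrow> (s::real) \<ge> 0 \<Longrightarrow>
  (s+1)\<^sup>2 * (L * ((s/(s+1))\<^sup>2 * E + (1/(L*(s+1)))\<^sup>2 * N)) = s\<^sup>2 * (L*E) + N/L"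
proof -
  assume L: "L > 0" and s: "s \<ge> 0"
  have a: "s + 1 \<noteq> 0" using s by simp
  have 1: "(s+1)\<^sup>2 * (s/(s+1))\<^sup>2 = s\<^sup>2" using a by (simp add: power_divide)
  have 2: "(s+1)\<^sup>2 * (1/(L*(s+1)))\<^sup>2 * L = 1/L" using a L by (simp add: power_divide power_mult_distrib power2_eq_square)
  have "(s+1)\<^sup>2 * (L * ((s/(s+1))\<^sup>2 * E + (1/(L*(s+1)))\<^sup>2 * N)) = ((s+1)\<^sup>2 * (s/(s+1))\<^sup>2) * (L * E) + ((s+1)\<^sup>2 * (1/(L*(s+1)))\<^sup>2 * L) * N"
    by (simp add: algebra_simps)
  also have "\<dots> = s\<^sup>2 * (L*E) + N/L" unfolding 1 2 by simp
  finally show ?thesis .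
qed

lemma sq_scale_int:
  fixes f :: "'a \<Rightarrow> real"
  assumes "integrable M (\<lambda>x. (f x)\<^sup>2)"
  shows "integrable M (\<lambda>x. (c * f x)\<^sup>2)"
  using assms by (simp add: power_mult_distrib)

theorem proposition1:
  fixes M :: "'a measure" and S :: "'s measure" and \<xi> :: "nat \<Rightarrow> 'a \<Rightarrow> 's"
    and Hf :: "'s \<Rightarrow> nat \<Rightarrow> nat \<Rightarrow> real" and bf :: "'s \<Rightarrow> nat \<Rightarrow> real"
    and d :: nat and lam :: "nat \<Rightarrow> real" and w1 :: "nat \<Rightarrow> real"
    and \<sigma> :: real and t :: nat
  defines "Hm \<equiv> \<lambda>i j. integral\<^sup>L M (\<lambda>\<omega>. Hf (\<xi> 1 \<omega>) i j)"
    and "bm \<equiv> \<lambda>j. integral\<^sup>L M (\<lambda>\<omega>. bf (\<xi> 1 \<omega>) j)"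
    and "wstar \<equiv> \<lambda>j. integral\<^sup>L M (\<lambda>\<omega>. bf (\<xi> 1 \<omega>) j) / lam j"
    and "w \<equiv> cw_sgd d lam w1 Hf bf \<xi>"
    and "n \<equiv> \<lambda>s \<omega>. noise d (\<lambda>i j. integral\<^sup>L M (\<lambda>\<omega>. Hf (\<xi> 1 \<omega>) i j)) (\<lambda>j. integral\<^sup>L M (\<lambda>\<omega>. bf (\<xi> 1 \<omega>) j)) Hf bf (cw_sgd d lam w1 Hf bf \<xi> s \<omega>) (\<xi> s \<omega>)"
    and "f \<equiv> obj M (\<xi> 1) d Hf bf"
  assumes "prob_space M"
    and "\<forall>s\<ge>1. \<xi> s \<in> measurable M S"
    and "prob_space.indep_vars M (\<lambda>_. S) \<xi> {1..}"
    and "\<forall>s\<ge>1. distr M S (\<xi> s) = distr M S (\<xi> 1)"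
    and "\<forall>i<d. \<forall>j<d. (\<lambda>x. Hf x i j) \<in> borel_measurable S"
    and "\<forall>j<d. (\<lambda>x. bf x j) \<in> borel_measurable S"
    and "\<forall>i<d. \<forall>j<d. integrable M (\<lambda>\<omega>. Hf (\<xi> 1 \<omega>) i j)"
    and "\<forall>j<d. integrable M (\<lambda>\<omega>. bf (\<xi> 1 \<omega>) j)"
    and "\<forall>x. \<forall>i<d. \<forall>j<d. Hf x i j = Hf x j i"
    and "\<forall>j<d. lam j > 0"
    and "\<forall>i j. i \<le> j \<longrightarrow> j < d \<longrightarrow> lam j \<le> lam i"
    and "\<forall>i<d. \<forall>j<d. Hm i j = (if i = j then lam i else 0)"
    and "\<forall>s\<ge>1. \<forall>i<d. \<forall>j<d. integrable M (\<lambda>\<omega>. n s \<omega> i * n s \<omega> j)"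
    and "\<forall>s\<ge>1. psd_le d (\<lambda>i j. integral\<^sup>L M (\<lambda>\<omega>. n s \<omega> i * n s \<omega> j))
                          (\<lambda>i j. \<sigma>\<^sup>2 * Hm i j)"
    and "t \<ge> 1"
  shows "2 * integral\<^sup>L M (\<lambda>\<omega>. f (w (t + 1) \<omega>) - f wstar)
           = integral\<^sup>L M (\<lambda>\<omega>. \<Sum>j<d. lam j * (w (t + 1) \<omega> j - wstar j)\<^sup>2)
       \<and> integral\<^sup>L M (\<lambda>\<omega>. \<Sum>j<d. lam j * (w (t + 1) \<omega> j - wstar j)\<^sup>2)
           \<le> (\<Sum>j<d. lam j * (w1 j - wstar j)\<^sup>2) / (real t + 1)\<^sup>2
              + real t / (real t + 1)\<^sup>2 * real d * \<sigma>\<^sup>2"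
proof -
  note Hm_def = assms(1) and bm_def = assms(2) and wstar_def = assms(3) and w_def = assms(4)
    and n_def = assms(5) and f_def = assms(6)
  interpret P: prob_space M by (rule assms(7))
  have xim: "\<And>s. s \<ge> 1 \<Longrightarrow> \<xi> s \<in> measurable M S" using assms(8) by auto
  have lampos: "\<And>j. j < d \<Longrightarrow> lam j > 0" using assms(16) by auto
  have Hdiag: "\<And>i j. i < d \<Longrightarrow> j < d \<Longrightarrow> Hm i j = (if i = j then lam i else 0)" using assms(18) by auto
  define c where "c = cw_sgd d lam w1 Hf bf (\<lambda>i x. x i)"
  define Y where "Y = (\<lambda>s \<omega>. restrict (\<lambda>i. \<xi> i \<omega>) {1..<s})"
  have wrepr: "w s \<omega> = c s (Y s \<omega>)" for s \<omega>
    unfolding w_def c_def Y_def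
    by (subst cw_sgd_repr) (rule cw_sgd_local, auto)
  have Ym: "Y s \<in> measurable M (PiM {1..<s} (\<lambda>_. S))" for s
    unfolding Y_def by (rule measurable_restrict) (use xim in auto)
  have cm: "\<And>s j. j < d \<Longrightarrow> (\<lambda>x. c s x j) \<in> borel_measurable (PiM {1..<s} (\<lambda>_. S))"
    unfolding c_def using cw_sgd_meas assms(11,12) by blast
  have wm: "\<And>s j. j < d \<Longrightarrow> (\<lambda>\<omega>. w s \<omega> j) \<in> borel_measurable M"
    unfolding wrepr using measurable_compose[OF Ym cm] by blast
  have ind: "P.indep_var borel (\<lambda>\<omega>. G (Y s \<omega>)) borel (\<lambda>\<omega>. h (\<xi> s \<omega>))"
    if "s \<ge> 1" "G \<in> borel_measurable (PiM {1..<s} (\<lambda>_. S))" "h \<in> borel_measurable S" for G h s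
  proof -
    have "P.indep_var (PiM {1..<s} (\<lambda>_. S)) (Y s) (PiM {s} (\<lambda>_. S)) (\<lambda>\<omega>. restrict (\<lambda>i. \<xi> i \<omega>) {s})"
      unfolding Y_def by (rule P.indep_var_restrict[OF assms(9)]) (use that in auto)
    moreover have "(\<lambda>f. h (f s)) \<in> borel_measurable (PiM {s} (\<lambda>_. S))"
      using measurable_compose[OF measurable_component_singleton[of s "{s}"] that(3)] by simp
    ultimately have "P.indep_var borel (G \<circ> Y s) borel ((\<lambda>f. h (f s)) \<circ> (\<lambda>\<omega>. restrict (\<lambda>i. \<xi> i \<omega>) {s}))"
      using P.indep_var_compose that(2) by blast
    thus ?thesis by (simp add: comp_def)
  qed
  have Hint: "integrable M (\<lambda>\<omega>. Hf (\<xi> s \<omega>) j k) \<and> integral\<^sup>L M (\<lambda>\<omega>. Hf (\<xi> s \<omega>) j k) = Hm j k"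
    if "s \<ge> 1" "j < d" "k < d" for s j k
  proof -
    have m: "(\<lambda>x. Hf x j k) \<in> borel_measurable S" using assms(11) that by auto
    have "integrable M (\<lambda>\<omega>. Hf (\<xi> s \<omega>) j k) = integrable (distr M S (\<xi> s)) (\<lambda>x. Hf x j k)"
      by (rule integrable_distr_eq[symmetric, OF xim[OF that(1)] m])
    also have "\<dots> = integrable (distr M S (\<xi> 1)) (\<lambda>x. Hf x j k)" by (simp only: assms(10)[rule_format, OF that(1)])
    also have "\<dots> = integrable M (\<lambda>\<omega>. Hf (\<xi> 1 \<omega>) j k)"
      by (rule integrable_distr_eq[OF xim m]) simp
    finally have 1: "integrable M (\<lambda>\<omega>. Hf (\<xi> s \<omega>) j k)" using assms(13) that by auto
    have "integral\<^sup>L M (\<lambda>\<omega>. Hf (\<xi> s \<omega>) j k) = integral\<^sup>L (distr M S (\<xi> s)) (\<lambda>x. Hf x j k)"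
      by (rule integral_distr[symmetric, OF xim[OF that(1)] m])
    also have "\<dots> = integral\<^sup>L (distr M S (\<xi> 1)) (\<lambda>x. Hf x j k)" by (simp only: assms(10)[rule_format, OF that(1)])
    also have "\<dots> = integral\<^sup>L M (\<lambda>\<omega>. Hf (\<xi> 1 \<omega>) j k)"
      by (rule integral_distr[OF xim m]) simp
    finally show ?thesis using 1 by (simp add: Hm_def)
  qed
  have bint: "integrable M (\<lambda>\<omega>. bf (\<xi> s \<omega>) j) \<and> integral\<^sup>L M (\<lambda>\<omega>. bf (\<xi> s \<omega>) j) = bm j"
    if "s \<ge> 1" "j < d" for s j
  proof -
    have m: "(\<lambda>x. bf x j) \<in> borel_measurable S" using assms(12) that by auto
    have "integrable M (\<lambda>\<omega>. bf (\<xi> s \<omega>) j) = integrable (distr M S (\<xi> s)) (\<lambda>x. bf x j)"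
      by (rule integrable_distr_eq[symmetric, OF xim[OF that(1)] m])
    also have "\<dots> = integrable (distr M S (\<xi> 1)) (\<lambda>x. bf x j)" by (simp only: assms(10)[rule_format, OF that(1)])
    also have "\<dots> = integrable M (\<lambda>\<omega>. bf (\<xi> 1 \<omega>) j)"
      by (rule integrable_distr_eq[OF xim m]) simp
    finally have 1: "integrable M (\<lambda>\<omega>. bf (\<xi> s \<omega>) j)" using assms(14) that by auto
    have "integral\<^sup>L M (\<lambda>\<omega>. bf (\<xi> s \<omega>) j) = integral\<^sup>L (distr M S (\<xi> s)) (\<lambda>x. bf x j)"
      by (rule integral_distr[symmetric, OF xim[OF that(1)] m])
    also have "\<dots> = integral\<^sup>L (distr M S (\<xi> 1)) (\<lambda>x. bf x j)" by (simp only: assms(10)[rule_format, OF that(1)])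
    also have "\<dots> = integral\<^sup>L M (\<lambda>\<omega>. bf (\<xi> 1 \<omega>) j)"
      by (rule integral_distr[OF xim m]) simp
    finally show ?thesis using 1 by (simp add: bm_def)
  qed
  have nexp: "n s \<omega> j = (\<Sum>k<d. (Hm j k - Hf (\<xi> s \<omega>) j k) * w s \<omega> k) - (bm j - bf (\<xi> s \<omega>) j)" for s \<omega> j
    unfolding n_def noise_def Hm_def bm_def w_def by (simp add: sum_subtractf left_diff_distrib)
  have Hfm: "(\<lambda>\<omega>. Hf (\<xi> s \<omega>) j k) \<in> borel_measurable M" if "s \<ge> 1" "j < d" "k < d" for s j k
    using measurable_compose[OF xim[OF that(1)], of "\<lambda>x. Hf x j k"] assms(11) that by auto
  have bfm: "(\<lambda>\<omega>. bf (\<xi> s \<omega>) j) \<in> borel_measurable M" if "s \<ge> 1" "j < d" for s j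
    using measurable_compose[OF xim[OF that(1)], of "\<lambda>x. bf x j"] assms(12) that by auto
  have nm: "(\<lambda>\<omega>. n s \<omega> j) \<in> borel_measurable M" if "s \<ge> 1" "j < d" for s j
    unfolding nexp using Hfm bfm wm that by (intro borel_measurable_diff borel_measurable_times borel_measurable_sum borel_measurable_const) auto
  have bmlam: "bm j = lam j * wstar j" if "j < d" for j
    using lampos[OF that] by (simp add: wstar_def bm_def)
  have Hsum: "(\<Sum>k<d. Hm j k * v k) = lam j * v j" if "j < d" for j v
  proof -
    have "(\<Sum>k<d. Hm j k * v k) = (\<Sum>k<d. if k = j then lam j * v j else 0)"
      by (rule sum.cong) (auto simp: Hdiag that)
    thus ?thesis using that by simp
  qed
  define e where "e = (\<lambda>s \<omega> j. w s \<omega> j - wstar j)"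
  have em: "(\<lambda>\<omega>. e s \<omega> j) \<in> borel_measurable M" if "j < d" for s j
    unfolding e_def using wm[OF that] by simp
  have stepeq: "e (Suc s) \<omega> j = (real s / (real s + 1)) * e s \<omega> j + (1 / (lam j * (real s + 1))) * n s \<omega> j"
    if "s \<ge> 1" "j < d" for s \<omega> j
  proof -
    define m where "m = s - 1"
    have s: "s = Suc m" using that(1) unfolding m_def by simp
    have A: "n s \<omega> j = lam j * w s \<omega> j - (\<Sum>k<d. Hf (\<xi> s \<omega>) j k * w s \<omega> k) - lam j * wstar j + bf (\<xi> s \<omega>) j"
      unfolding nexp using Hsum[OF that(2)] bmlam[OF that(2)] by (simp add: left_diff_distrib sum_subtractf)
    have B: "w (Suc s) \<omega> j = w s \<omega> j - 1/(lam j * (real s + 1)) * ((\<Sum>k<d. Hf (\<xi> s \<omega>) j k * w s \<omega> k) - bf (\<xi> s \<omega>) j)"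
      unfolding w_def s by simp
    have lp: "lam j > 0" using lampos[OF that(2)] .
    have "w (Suc s) \<omega> j - wstar j = real s / (real s + 1) * (w s \<omega> j - wstar j) + 1 / (lam j * (real s + 1)) *
       (lam j * w s \<omega> j - (\<Sum>k<d. Hf (\<xi> s \<omega>) j k * w s \<omega> k) - lam j * wstar j + bf (\<xi> s \<omega>) j)"
      unfolding B by (rule alg[OF lp]) simp
    then show ?thesis unfolding e_def A .
  qed
  have nsq: "integrable M (\<lambda>\<omega>. (n s \<omega> j)\<^sup>2)" if "s \<ge> 1" "j < d" for s j
    using assms(19) that by (simp add: power2_eq_square)
  have w1eq: "w (Suc 0) \<omega> = w1" for \<omega> unfolding w_def by simp
  have L2: "\<forall>j<d. integrable M (\<lambda>\<omega>. (e s \<omega> j)\<^sup>2)" if "s \<ge> 1" for s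
    using that
  proof (induction s rule: nat_induct_at_least)
    case base thus ?case by (simp add: e_def w1eq)
  next
    case (Suc s)
    show ?case
    proof (intro allI impI)
      fix j assume j: "j < d"
      have "integrable M (\<lambda>\<omega>. ((real s / (real s + 1)) * e s \<omega> j + (1 / (lam j * (real s + 1))) * n s \<omega> j)\<^sup>2)"
        using Suc j em nm nsq by (intro sq_add_int sq_scale_int) auto
      thus "integrable M (\<lambda>\<omega>. (e (Suc s) \<omega> j)\<^sup>2)" using stepeq[OF Suc(1) j] by simp
    qed
  qed
  have wsq: "integrable M (\<lambda>\<omega>. (w s \<omega> k)\<^sup>2)" if "s \<ge> 1" "k < d" for s k
  proof -
    have "integrable M (\<lambda>\<omega>. (e s \<omega> k + wstar k)\<^sup>2)"
      using L2[OF that(1)] that em by (intro sq_add_int) auto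
    thus ?thesis by (simp add: e_def)
  qed
  have cross: "integrable M (\<lambda>\<omega>. e s \<omega> j * n s \<omega> j) \<and> integral\<^sup>L M (\<lambda>\<omega>. e s \<omega> j * n s \<omega> j) = 0"
    if s1: "s \<ge> 1" and j: "j < d" for s j
  proof -
    have dec: "(\<lambda>\<omega>. e s \<omega> j * n s \<omega> j) = (\<lambda>\<omega>. (\<Sum>k<d. (e s \<omega> j * w s \<omega> k) * (Hm j k - Hf (\<xi> s \<omega>) j k))
        - e s \<omega> j * (bm j - bf (\<xi> s \<omega>) j))"
      by (rule ext) (simp add: nexp sum_distrib_left right_diff_distrib mult_ac)
    have T1: "integrable M (\<lambda>\<omega>. (e s \<omega> j * w s \<omega> k) * (Hm j k - Hf (\<xi> s \<omega>) j k)) \<and>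
              integral\<^sup>L M (\<lambda>\<omega>. (e s \<omega> j * w s \<omega> k) * (Hm j k - Hf (\<xi> s \<omega>) j k)) = 0"
      if k: "k < d" for k
    proof -
      have iv: "P.indep_var borel (\<lambda>\<omega>. e s \<omega> j * w s \<omega> k) borel (\<lambda>\<omega>. Hm j k - Hf (\<xi> s \<omega>) j k)"
      proof -
        have G: "(\<lambda>x. (c s x j - wstar j) * c s x k) \<in> borel_measurable (PiM {1..<s} (\<lambda>_. S))"
          using cm[OF j, of s] cm[OF k, of s] by simp
        have h: "(\<lambda>y. Hm j k - Hf y j k) \<in> borel_measurable S"
          by (intro borel_measurable_diff borel_measurable_const) (use assms(11) j k in auto)
        show ?thesis using ind[OF s1 G h] by (simp add: e_def wrepr)
      qed
      have i1: "integrable M (\<lambda>\<omega>. e s \<omega> j * w s \<omega> k)"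
        by (rule sq_mult_int) (use em[OF j] wm[OF k] L2[OF s1] j wsq[OF s1 k] in auto)
      have i2: "integrable M (\<lambda>\<omega>. Hm j k - Hf (\<xi> s \<omega>) j k)" using Hint[OF s1 j k] by simp
      have z: "integral\<^sup>L M (\<lambda>\<omega>. Hm j k - Hf (\<xi> s \<omega>) j k) = 0"
        using Hint[OF s1 j k] by (simp add: P.prob_space)
      show ?thesis using P.indep_var_integrable[OF iv i1 i2] P.indep_var_lebesgue_integral[OF iv i1 i2] z by simp
    qed
    have T2: "integrable M (\<lambda>\<omega>. e s \<omega> j * (bm j - bf (\<xi> s \<omega>) j)) \<and>
              integral\<^sup>L M (\<lambda>\<omega>. e s \<omega> j * (bm j - bf (\<xi> s \<omega>) j)) = 0"
    proof -
      have iv: "P.indep_var borel (\<lambda>\<omega>. e s \<omega> j) borel (\<lambda>\<omega>. bm j - bf (\<xi> s \<omega>) j)"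
      proof -
        have G: "(\<lambda>x. c s x j - wstar j) \<in> borel_measurable (PiM {1..<s} (\<lambda>_. S))"
          using cm[OF j, of s] by simp
        have h: "(\<lambda>y. bm j - bf y j) \<in> borel_measurable S"
          by (intro borel_measurable_diff borel_measurable_const) (use assms(12) j in auto)
        show ?thesis using ind[OF s1 G h] by (simp add: e_def wrepr)
      qed
      have i1: "integrable M (\<lambda>\<omega>. e s \<omega> j)"
      proof -
        have "integrable M (\<lambda>\<omega>. e s \<omega> j * 1)"
          by (rule sq_mult_int) (use em[OF j] L2[OF s1] j in auto)
        thus ?thesis by simp
      qed
      have i2: "integrable M (\<lambda>\<omega>. bm j - bf (\<xi> s \<omega>) j)" using bint[OF s1 j] by simp
      have z: "integral\<^sup>L M (\<lambda>\<omega>. bm j - bf (\<xi> s \<omega>) j) = 0"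
        using bint[OF s1 j] by (simp add: P.prob_space)
      show ?thesis using P.indep_var_integrable[OF iv i1 i2] P.indep_var_lebesgue_integral[OF iv i1 i2] z by simp
    qed
    have IS: "integrable M (\<lambda>\<omega>. \<Sum>k<d. (e s \<omega> j * w s \<omega> k) * (Hm j k - Hf (\<xi> s \<omega>) j k))"
      by (rule Bochner_Integration.integrable_sum) (use T1 in auto)
    have ZS: "integral\<^sup>L M (\<lambda>\<omega>. \<Sum>k<d. (e s \<omega> j * w s \<omega> k) * (Hm j k - Hf (\<xi> s \<omega>) j k)) = 0"
      by (subst Bochner_Integration.integral_sum) (use T1 in auto)
    show ?thesis unfolding dec using IS ZS T2 by (simp add: integral_diff)
  qed
  have Esq: "integral\<^sup>L M (\<lambda>\<omega>. (e (Suc s) \<omega> j)\<^sup>2) = (real s / (real s + 1))\<^sup>2 * integral\<^sup>L M (\<lambda>\<omega>. (e s \<omega> j)\<^sup>2)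
      + (1 / (lam j * (real s + 1)))\<^sup>2 * integral\<^sup>L M (\<lambda>\<omega>. (n s \<omega> j)\<^sup>2)"
    if s1: "s \<ge> 1" and j: "j < d" for s j
  proof -
    define a where "a = real s / (real s + 1)"
    define b where "b = 1 / (lam j * (real s + 1))"
    have "(\<lambda>\<omega>. (e (Suc s) \<omega> j)\<^sup>2) = (\<lambda>\<omega>. a\<^sup>2 * (e s \<omega> j)\<^sup>2 + (2 * a * b) * (e s \<omega> j * n s \<omega> j) + b\<^sup>2 * (n s \<omega> j)\<^sup>2)"
      by (rule ext) (simp add: stepeq[OF s1 j] a_def[symmetric] b_def[symmetric] power2_sum power_mult_distrib mult_ac)
    moreover have "integrable M (\<lambda>\<omega>. (e s \<omega> j)\<^sup>2)" using L2[OF s1] j by auto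
    moreover note cross[OF s1 j] nsq[OF s1 j]
    ultimately show ?thesis unfolding a_def[symmetric] b_def[symmetric] by simp
  qed
  have nbound: "integral\<^sup>L M (\<lambda>\<omega>. (n s \<omega> j)\<^sup>2) \<le> \<sigma>\<^sup>2 * lam j" if s1: "s \<ge> 1" and j: "j < d" for s j
  proof -
    define A where "A = (\<lambda>i k. \<sigma>\<^sup>2 * Hm i k - integral\<^sup>L M (\<lambda>\<omega>. n s \<omega> i * n s \<omega> k))"
    have "quad d A (\<lambda>i. if i = j then 1 else 0) \<ge> 0"
      using assms(20) s1 unfolding psd_le_def A_def by auto
    moreover have "quad d A (\<lambda>i. if i = j then 1 else 0) = A j j"
      using quad_delta[OF j] .
    ultimately show ?thesis unfolding A_def using Hdiag[OF j j] by (simp add: power2_eq_square)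
  qed
  define D where "D = (\<lambda>s. \<Sum>j<d. lam j * integral\<^sup>L M (\<lambda>\<omega>. (e s \<omega> j)\<^sup>2))"
  have rec: "(real s + 1)\<^sup>2 * D (Suc s) \<le> (real s)\<^sup>2 * D s + real d * \<sigma>\<^sup>2" if s1: "s \<ge> 1" for s
  proof -
    have per: "(real s + 1)\<^sup>2 * (lam j * integral\<^sup>L M (\<lambda>\<omega>. (e (Suc s) \<omega> j)\<^sup>2))
       \<le> (real s)\<^sup>2 * (lam j * integral\<^sup>L M (\<lambda>\<omega>. (e s \<omega> j)\<^sup>2)) + \<sigma>\<^sup>2" if j: "j < d" for j
    proof -
      have lp: "lam j > 0" using lampos[OF j] .
      have sp: "real s + 1 > 0" by simp
      have "(real s + 1)\<^sup>2 * (lam j * integral\<^sup>L M (\<lambda>\<omega>. (e (Suc s) \<omega> j)\<^sup>2))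
         = (real s)\<^sup>2 * (lam j * integral\<^sup>L M (\<lambda>\<omega>. (e s \<omega> j)\<^sup>2)) + integral\<^sup>L M (\<lambda>\<omega>. (n s \<omega> j)\<^sup>2) / lam j"
        unfolding Esq[OF s1 j] using alg2[OF lp, of "real s"] by simp
      also have "\<dots> \<le> (real s)\<^sup>2 * (lam j * integral\<^sup>L M (\<lambda>\<omega>. (e s \<omega> j)\<^sup>2)) + \<sigma>\<^sup>2"
        using nbound[OF s1 j] lp by (simp add: divide_le_eq)
      finally show ?thesis .
    qed
    have "(real s + 1)\<^sup>2 * D (Suc s) = (\<Sum>j<d. (real s + 1)\<^sup>2 * (lam j * integral\<^sup>L M (\<lambda>\<omega>. (e (Suc s) \<omega> j)\<^sup>2)))"
      unfolding D_def by (simp add: sum_distrib_left)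
    also have "\<dots> \<le> (\<Sum>j<d. (real s)\<^sup>2 * (lam j * integral\<^sup>L M (\<lambda>\<omega>. (e s \<omega> j)\<^sup>2)) + \<sigma>\<^sup>2)"
      by (rule sum_mono) (use per in auto)
    also have "\<dots> = (real s)\<^sup>2 * D s + real d * \<sigma>\<^sup>2"
      unfolding D_def by (simp add: sum.distrib sum_distrib_left)
    finally show ?thesis .
  qed
  define D0 where "D0 = (\<Sum>j<d. lam j * (w1 j - wstar j)\<^sup>2)"
  have Q: "(real k + 1)\<^sup>2 * D (Suc k) \<le> D0 + real k * real d * \<sigma>\<^sup>2" for k
  proof (induction k)
    case 0
    have "D (Suc 0) = D0" unfolding D_def D0_def e_def w1eq by (simp add: P.prob_space)
    thus ?case by simp
  next
    case (Suc k)
    have "(real (Suc k) + 1)\<^sup>2 * D (Suc (Suc k)) \<le> (real (Suc k))\<^sup>2 * D (Suc k) + real d * \<sigma>\<^sup>2"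
      using rec[of "Suc k"] by simp
    also have "\<dots> \<le> D0 + real k * real d * \<sigma>\<^sup>2 + real d * \<sigma>\<^sup>2" using Suc by (simp add: add.commute)
    finally show ?case by (simp add: algebra_simps)
  qed
  have intS: "integral\<^sup>L M (\<lambda>\<omega>. \<Sum>j<d. lam j * (w (t + 1) \<omega> j - wstar j)\<^sup>2) = D (t + 1)"
  proof -
    have "integral\<^sup>L M (\<lambda>\<omega>. \<Sum>j<d. lam j * (e (t + 1) \<omega> j)\<^sup>2) = (\<Sum>j<d. integral\<^sup>L M (\<lambda>\<omega>. lam j * (e (t + 1) \<omega> j)\<^sup>2))"
      by (rule Bochner_Integration.integral_sum) (use L2[of "t+1"] in auto)
    thus ?thesis unfolding D_def e_def by simp
  qed
  have part2: "D (t + 1) \<le> D0 / (real t + 1)\<^sup>2 + real t / (real t + 1)\<^sup>2 * real d * \<sigma>\<^sup>2"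
  proof -
    have p: "(real t + 1)\<^sup>2 > 0" by simp
    have "D (t + 1) \<le> (D0 + real t * real d * \<sigma>\<^sup>2) / (real t + 1)\<^sup>2"
      using Q[of t] p by (simp add: le_divide_eq mult.commute)
    thus ?thesis by (simp add: add_divide_distrib)
  qed
  have fv: "f v = (\<Sum>i<d. lam i * (v i)\<^sup>2 / 2 - bm i * v i)" for v
  proof -
    have HmI: "\<And>i k. Hm i k = integral\<^sup>L M (\<lambda>\<omega>. Hf (\<xi> 1 \<omega>) i k)" by (simp add: Hm_def)
    have bmI: "\<And>i. bm i = integral\<^sup>L M (\<lambda>\<omega>. bf (\<xi> 1 \<omega>) i)" by (simp add: bm_def)
    have iq: "integral\<^sup>L M (\<lambda>\<omega>. quad d (Hf (\<xi> 1 \<omega>)) v) = (\<Sum>i<d. \<Sum>k<d. v i * Hm i k * v k)"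
    proof -
      have ii: "\<And>i k. i < d \<Longrightarrow> k < d \<Longrightarrow> integrable M (\<lambda>\<omega>. v i * Hf (\<xi> 1 \<omega>) i k * v k)"
        using assms(13) by simp
      have "integral\<^sup>L M (\<lambda>\<omega>. quad d (Hf (\<xi> 1 \<omega>)) v) = (\<Sum>i<d. integral\<^sup>L M (\<lambda>\<omega>. \<Sum>k<d. v i * Hf (\<xi> 1 \<omega>) i k * v k))"
        unfolding quad_def
        by (rule Bochner_Integration.integral_sum) (use ii in \<open>auto intro!: Bochner_Integration.integrable_sum\<close>)
      also have "\<dots> = (\<Sum>i<d. \<Sum>k<d. integral\<^sup>L M (\<lambda>\<omega>. v i * Hf (\<xi> 1 \<omega>) i k * v k))"
        by (rule sum.cong[OF refl], rule Bochner_Integration.integral_sum) (use ii in auto)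
      also have "\<dots> = (\<Sum>i<d. \<Sum>k<d. v i * Hm i k * v k)" by (simp add: HmI)
      finally show ?thesis .
    qed
    have iq2: "(\<Sum>i<d. \<Sum>k<d. v i * Hm i k * v k) = (\<Sum>i<d. lam i * (v i)\<^sup>2)"
    proof (rule sum.cong)
      fix i assume i: "i \<in> {..<d}"
      have "(\<Sum>k<d. v i * Hm i k * v k) = v i * (\<Sum>k<d. Hm i k * v k)" by (simp add: sum_distrib_left mult.assoc)
      also have "\<dots> = lam i * (v i)\<^sup>2" using Hsum[of i v] i by (simp add: power2_eq_square)
      finally show "(\<Sum>k<d. v i * Hm i k * v k) = lam i * (v i)\<^sup>2" .
    qed simp
    have ib: "integral\<^sup>L M (\<lambda>\<omega>. \<Sum>j<d. bf (\<xi> 1 \<omega>) j * v j) = (\<Sum>j<d. bm j * v j)"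
      unfolding bmI
      by (subst Bochner_Integration.integral_sum) (use assms(14) in auto)
    have qi: "integrable M (\<lambda>\<omega>. quad d (Hf (\<xi> 1 \<omega>)) v)"
      unfolding quad_def by (intro Bochner_Integration.integrable_sum) (use assms(13) in simp)
    have bi: "integrable M (\<lambda>\<omega>. \<Sum>j<d. bf (\<xi> 1 \<omega>) j * v j)"
      by (intro Bochner_Integration.integrable_sum) (use assms(14) in simp)
    have "f v = integral\<^sup>L M (\<lambda>\<omega>. quad d (Hf (\<xi> 1 \<omega>)) v) / 2 - integral\<^sup>L M (\<lambda>\<omega>. \<Sum>j<d. bf (\<xi> 1 \<omega>) j * v j)"
      unfolding f_def obj_def loss_def using qi bi by simp
    also have "\<dots> = (\<Sum>i<d. lam i * (v i)\<^sup>2) / 2 - (\<Sum>j<d. bm j * v j)" unfolding iq iq2 ib ..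
    finally show ?thesis by (simp add: sum_subtractf sum_divide_distrib)
  qed
  have fdiff: "f v - f wstar = (\<Sum>j<d. lam j * (v j - wstar j)\<^sup>2) / 2" for v
  proof -
    have "f v - f wstar = (\<Sum>j<d. (lam j * (v j)\<^sup>2 / 2 - bm j * v j) - (lam j * (wstar j)\<^sup>2 / 2 - bm j * wstar j))"
      unfolding fv by (simp add: sum_subtractf)
    also have "\<dots> = (\<Sum>j<d. lam j * (v j - wstar j)\<^sup>2 / 2)"
      by (rule sum.cong) (auto simp: bmlam power2_eq_square field_simps)
    finally show ?thesis by (simp add: sum_divide_distrib)
  qed
  have part1: "2 * integral\<^sup>L M (\<lambda>\<omega>. f (w (t + 1) \<omega>) - f wstar)
      = integral\<^sup>L M (\<lambda>\<omega>. \<Sum>j<d. lam j * (w (t + 1) \<omega> j - wstar j)\<^sup>2)"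
    unfolding fdiff by simp
  show ?thesis using part1 part2 intS unfolding D0_def by simp
qed

end
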